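(* Let $\omega\in(0,1)$ be irrational and $s>0$. Then $$\limsup_{N\to+\infty}\Big(\sum_{j=0}^{k(N)}\frac{\log q_{j+1}}{q_j}-s\log N\Big)<+\infty$$ holds if and only if $$\limsup_{k\to+\infty}\Big(\sum_{j=0}^{k}\beta_{j-1}\log\omega_j^{-1}+s\log\beta_{k-1}\Big)<+\infty.$$
   Context: Continued fraction data of $\omega$: $\omega_0=\omega$, $\omega_{k+1}=\{1/\omega_k\}$ (fractional part), $a_{k+1}=\lfloor1/\omega_k\rfloor$; $\beta_{-1}=1$, $\beta_k=\prod_{j=0}^k\omega_j$ for $k\ge0$; the convergent denominators are $q_{-1}=0$, $q_0=1$, $q_{k+1}=a_{k+1}q_k+q_{k-1}$. $k(N)$ is defined by $q_{k(N)}\le N<q_{k(N)+1}$. *)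

theory Defs
  imports Complex_Main "HOL-Library.Extended_Real" "HOL-Library.Liminf_Limsup"
begin

fun cf_omega :: "real \<Rightarrow> nat \<Rightarrow> real" where
  "cf_omega w 0 = w"
| "cf_omega w (Suc k) = frac (1 / cf_omega w k)"

definition cf_a :: "real \<Rightarrow> nat \<Rightarrow> nat" where
  "cf_a w k = nat \<lfloor>1 / cf_omega w (k - 1)\<rfloor>"

text \<open>Shifted beta: cf_beta w m = beta_(m-1) = prod_(j<m) omega_j, so cf_beta w 0 = beta_(-1) = 1.\<close>
definition cf_beta :: "real \<Rightarrow> nat \<Rightarrow> real" where
  "cf_beta w m = (\<Prod>j<m. cf_omega w j)"

text \<open>Convergent denominators: q_(-1) = 0, q_0 = 1, q_(k+1) = a_(k+1) q_k + q_(k-1).\<close>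
fun cf_q :: "real \<Rightarrow> nat \<Rightarrow> nat" where
  "cf_q w 0 = 1"
| "cf_q w (Suc 0) = cf_a w 1"
| "cf_q w (Suc (Suc k)) = cf_a w (Suc (Suc k)) * cf_q w (Suc k) + cf_q w k"

text \<open>k(N): the index with q_k(N) <= N < q_(k(N)+1) (unique for N >= 1).\<close>
definition cf_kN :: "real \<Rightarrow> nat \<Rightarrow> nat" where
  "cf_kN w N = (THE k. cf_q w k \<le> N \<and> N < cf_q w (Suc k))"

end

theory Submission
  imports Defs
begin


lemma limsup_bdd_iff:
  fixes x :: "nat \<Rightarrow> real"
  shows "limsup (\<lambda>n. ereal (x n)) < \<infinity> \<longleftrightarrow> (\<exists>M. \<forall>n. x n \<le> M)"
proof
  assume "limsup (\<lambda>n. ereal (x n)) < \<infinity>"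
  then obtain M :: real where M: "limsup (\<lambda>n. ereal (x n)) < ereal M"
    by (metis ereal_less_PInfty ereal_dense2 less_ereal.simps(1) ereal_real' ereal_less(6) less_irrefl)
  then have "eventually (\<lambda>n. ereal (x n) < ereal M) sequentially"
    using Limsup_lessD by blast
  then obtain N0 where N0: "\<And>n. n \<ge> N0 \<Longrightarrow> x n < M"
    by (auto simp: eventually_sequentially)
  define M' where "M' = max M (Max (x ` {..<N0}) )"
  have "x n \<le> M'" for n
  proof (cases "n < N0")
    case True
    then have "x n \<le> Max (x ` {..<N0})" by (intro Max_ge) auto
    then show ?thesis unfolding M'_def by linarith
  next
    case False
    then show ?thesis using N0[of n] unfolding M'_def by linarith
  qed
  then show "\<exists>M. \<forall>n. x n \<le> M" by blast
next
  assume "\<exists>M. \<forall>n. x n \<le> M"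
  then obtain M where "\<forall>n. x n \<le> M" by blast
  then have "limsup (\<lambda>n. ereal (x n)) \<le> ereal M"
    by (intro Limsup_bounded) auto
  then show "limsup (\<lambda>n. ereal (x n)) < \<infinity>"
    using order.strict_trans1 by fastforce
qed



context
  fixes w :: real
  assumes w0: "0 < w" and w1: "w < 1" and wirr: "w \<notin> \<rat>"
begin

lemma om_props: "0 < cf_omega w j \<and> cf_omega w j < 1 \<and> cf_omega w j \<notin> \<rat>"
proof (induction j)
  case 0
  then show ?case using w0 w1 wirr by simp
next
  case (Suc j)
  define x where "x = cf_omega w j"
  have xq: "x \<notin> \<rat>" and xp: "x > 0" using Suc x_def by auto
  have ix: "1 / x \<notin> \<rat>"
  proof
    assume "1 / x \<in> \<rat>"
    then have "1 / (1 / x) \<in> \<rat>" by (rule Rats_divide[OF Rats_1])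
    then show False using xq xp by simp
  qed
  have fq: "frac (1 / x) \<notin> \<rat>"
  proof
    assume "frac (1 / x) \<in> \<rat>"
    then have "frac (1 / x) + of_int \<lfloor>1/x\<rfloor> \<in> \<rat>" by (intro Rats_add) auto
    then show False using ix by (simp add: frac_def)
  qed
  have "frac (1/x) \<noteq> 0" using fq by (metis Rats_0)
  then have "frac (1/x) > 0" using frac_ge_0 by (metis order_le_less)
  then show ?case using fq frac_lt_1 by (simp add: x_def)
qed

lemma om_pos: "0 < cf_omega w j" using om_props by blast
lemma om_lt1: "cf_omega w j < 1" using om_props by blast

lemma a_eq: "real (cf_a w (Suc j)) = 1 / cf_omega w j - cf_omega w (Suc j)"
proof -
  have "1 / cf_omega w j \<ge> 1" using om_pos[of j] om_lt1[of j] by simp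
  then have f: "\<lfloor>1 / cf_omega w j\<rfloor> \<ge> 1" by simp
  have "real (nat \<lfloor>1 / cf_omega w j\<rfloor>) = of_int \<lfloor>1 / cf_omega w j\<rfloor>"
    using f by (intro of_nat_nat) linarith
  then show ?thesis by (simp add: cf_a_def frac_def)
qed

lemma a_ge1: "cf_a w (Suc j) \<ge> 1"
proof -
  have "1 / cf_omega w j \<ge> 1" using om_pos[of j] om_lt1[of j] by simp
  then have f: "\<lfloor>1 / cf_omega w j\<rfloor> \<ge> 1" by simp
  have "cf_a w (Suc j) = nat \<lfloor>1 / cf_omega w j\<rfloor>" by (simp add: cf_a_def)
  then show ?thesis using f by linarith
qed

lemma b_0: "cf_beta w 0 = 1" by (simp add: cf_beta_def)
lemma b_Suc: "cf_beta w (Suc m) = cf_omega w m * cf_beta w m"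
  by (simp add: cf_beta_def)
lemma b_pos: "cf_beta w m > 0"
  unfolding cf_beta_def using om_pos by (intro prod_pos) auto
lemma b_dec: "cf_beta w (Suc m) \<le> cf_beta w m"
  using b_Suc[of m] b_pos[of m] om_lt1[of m] by (simp add: mult_le_cancel_right1 less_imp_le)
lemma b_le1: "cf_beta w m \<le> 1"
  by (induction m) (use b_dec b_0 in \<open>auto intro: order_trans\<close>)

lemma b_rec: "cf_beta w m = real (cf_a w (Suc m)) * cf_beta w (Suc m) + cf_beta w (Suc (Suc m))"
proof -
  have o: "cf_omega w m \<noteq> 0" using om_pos[of m] by simp
  show ?thesis unfolding a_eq b_Suc using o by (simp add: field_simps)
qed

lemma F2: "real (cf_q w (Suc m)) * cf_beta w (Suc m) + real (cf_q w m) * cf_beta w (Suc (Suc m)) = 1"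
proof (induction m)
  case 0
  then show ?case using b_rec[of 0] b_0 by simp
next
  case (Suc m)
  have r: "cf_beta w (Suc (Suc (Suc m))) = cf_beta w (Suc m) - real (cf_a w (Suc (Suc m))) * cf_beta w (Suc (Suc m))"
    using b_rec[of "Suc m"] by simp
  show ?case unfolding r using Suc by (simp add: algebra_simps)
qed

lemma q_mono_Suc: "cf_q w k \<le> cf_q w (Suc k)"
proof (cases k)
  case 0 then show ?thesis using a_ge1[of 0] by simp
next
  case (Suc j)
  have h: "cf_q w (Suc j) \<le> cf_a w (Suc (Suc j)) * cf_q w (Suc j)" using a_ge1[of "Suc j"] by (metis mult_le_mono1 mult_1)
  have e: "cf_q w (Suc (Suc j)) = cf_a w (Suc (Suc j)) * cf_q w (Suc j) + cf_q w j" by simp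
  show ?thesis unfolding Suc using h e by linarith
qed

lemma q_mono: "i \<le> j \<Longrightarrow> cf_q w i \<le> cf_q w j"
  using lift_Suc_mono_le[of "cf_q w", OF q_mono_Suc] by blast

lemma q_ge1: "cf_q w k \<ge> 1"
  using q_mono[of 0 k] by simp

lemma q_strict: assumes "k \<ge> 1" shows "cf_q w k < cf_q w (Suc k)"
proof (cases k)
  case 0 then show ?thesis using assms by simp
next
  case (Suc j)
  have h: "cf_q w (Suc j) \<le> cf_a w (Suc (Suc j)) * cf_q w (Suc j)" using a_ge1[of "Suc j"] by (metis mult_le_mono1 mult_1)
  have e: "cf_q w (Suc (Suc j)) = cf_a w (Suc (Suc j)) * cf_q w (Suc j) + cf_q w j" by simp
  show ?thesis unfolding Suc using q_ge1[of j] h e by linarith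
qed

lemma q_ge: "cf_q w k \<ge> k"
proof (induction k)
  case 0 then show ?case by simp
next
  case (Suc k)
  show ?case
  proof (cases "k = 0")
    case True then show ?thesis using q_ge1[of 1] by simp
  next
    case False then show ?thesis using q_strict[of k] Suc by simp
  qed
qed

lemma qb_le1: "real (cf_q w k) * cf_beta w k \<le> 1"
proof (cases k)
  case 0 then show ?thesis by (simp add: b_0)
next
  case (Suc m)
  have "0 \<le> real (cf_q w m) * cf_beta w (Suc (Suc m))" using b_pos[of "Suc (Suc m)"] by simp
  then show ?thesis unfolding Suc using F2[of m] by linarith
qed

lemma qb_ge: "1 \<le> real (cf_q w k) * (cf_beta w k + cf_beta w (Suc k))"
proof (cases k)
  case 0 then show ?thesis using b_pos[of 1] by (simp add: b_0)
next
  case (Suc m)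
  have "real (cf_q w m) * cf_beta w (Suc (Suc m)) \<le> real (cf_q w (Suc m)) * cf_beta w (Suc (Suc m))"
    using b_pos[of "Suc (Suc m)"] q_mono_Suc[of m] by (intro mult_right_mono) auto
  then show ?thesis unfolding Suc using F2[of m] by (simp add: algebra_simps)
qed

lemma qb_ge2: "1 \<le> 2 * real (cf_q w k) * cf_beta w k"
proof -
  have "real (cf_q w k) * cf_beta w (Suc k) \<le> real (cf_q w k) * cf_beta w k"
    using b_dec[of k] by (intro mult_left_mono) auto
  then show ?thesis using qb_ge[of k] by (simp add: algebra_simps)
qed

lemma b_half: "cf_beta w (Suc (Suc m)) \<le> cf_beta w m / 2"
proof -
  have "cf_beta w (Suc m) \<le> real (cf_a w (Suc m)) * cf_beta w (Suc m)"
    using a_ge1[of m] b_pos[of "Suc m"] by (simp add: mult_le_cancel_right1)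
  then show ?thesis using b_rec[of m] b_dec[of "Suc m"] by linarith
qed

end


lemma xlog_le: fixes x :: real assumes "0 < x" "x \<le> 1" shows "x * ln (1/x) \<le> 2 * sqrt x"
proof -
  define y where "y = sqrt x"
  have y: "y > 0" "x = y^2" using assms by (auto simp: y_def)
  have "ln (1/x) = 2 * ln (1/y)" using y by (simp add: ln_div ln_realpow)
  moreover have "ln (1/y) \<le> 1/y" using ln_le_minus_one[of "1/y"] y by simp
  ultimately have "2 * ln (1/y) \<le> 2 * (1/y)" and e: "x * ln (1/x) = y^2 * (2 * ln (1/y))" using y by auto
  then have "y^2 * (2 * ln (1/y)) \<le> y^2 * (2 * (1/y))" by (intro mult_left_mono) auto
  then have "x * ln (1/x) \<le> y^2 * (2 * (1/y))" using e by simp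
  also have "\<dots> = 2 * y" using y by (simp add: power2_eq_square)
  finally show ?thesis by (simp add: y_def)
qed

context
  fixes w :: real
  assumes w0: "0 < w" and w1: "w < 1" and wirr: "w \<notin> \<rat>"
begin

lemma kN_unique:
  assumes "cf_q w k1 \<le> N" "N < cf_q w (Suc k1)" "cf_q w k2 \<le> N" "N < cf_q w (Suc k2)"
  shows "k1 = k2"
proof (rule ccontr)
  assume "k1 \<noteq> k2"
  then consider "Suc k1 \<le> k2" | "Suc k2 \<le> k1" by linarith
  then show False
  proof cases
    case 1 then show ?thesis using q_mono[OF w0 w1 wirr 1] assms by linarith
  next
    case 2 then show ?thesis using q_mono[OF w0 w1 wirr 2] assms by linarith
  qed
qed

lemma kN_spec: assumes "N \<ge> 1"
  shows "cf_q w (cf_kN w N) \<le> N \<and> N < cf_q w (Suc (cf_kN w N))"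
proof -
  define S where "S = {k. cf_q w k \<le> N}"
  have fin: "finite S"
  proof (rule finite_subset)
    show "S \<subseteq> {..N}" unfolding S_def using q_ge[OF w0 w1 wirr] by (auto intro: order_trans)
  qed auto
  have "0 \<in> S" using assms by (simp add: S_def)
  define K where "K = Max S"
  have KS: "K \<in> S" unfolding K_def using fin \<open>0 \<in> S\<close> by (intro Max_in) auto
  have "Suc K \<notin> S" using Max_ge[OF fin, of "Suc K"] unfolding K_def by auto
  then have ex: "cf_q w K \<le> N \<and> N < cf_q w (Suc K)" using KS by (auto simp: S_def)
  have "\<exists>!k. cf_q w k \<le> N \<and> N < cf_q w (Suc k)"
    using ex kN_unique by blast
  then show ?thesis unfolding cf_kN_def by (rule theI')
qed

lemma kN_q: assumes "k \<ge> 1" shows "cf_kN w (cf_q w k) = k"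
  unfolding cf_kN_def
proof (rule the_equality)
  show "cf_q w k \<le> cf_q w k \<and> cf_q w k < cf_q w (Suc k)" using q_strict[OF w0 w1 wirr assms] by simp
next
  fix k' assume "cf_q w k' \<le> cf_q w k \<and> cf_q w k < cf_q w (Suc k')"
  then show "k' = k" using kN_unique[of k' "cf_q w k" k] q_strict[OF w0 w1 wirr assms] by auto
qed

lemma b_geom: "cf_beta w m \<le> 4 * sqrt (1/2) ^ m \<and> cf_beta w (Suc m) \<le> 4 * sqrt (1/2) ^ Suc m"
proof (induction m)
  case 0
  have "sqrt (1/2) \<ge> (1/2::real)" by (rule real_le_rsqrt) (simp add: power2_eq_square)
  then have h: "1 \<le> sqrt (1/2) * (2::real)" by linarith
  show ?case using b_le1[OF w0 w1 wirr, of 0] b_le1[OF w0 w1 wirr, of 1] h by simp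
next
  case (Suc m)
  have "cf_beta w (Suc (Suc m)) \<le> cf_beta w m / 2" by (rule b_half[OF w0 w1 wirr])
  also have "\<dots> \<le> 4 * sqrt (1/2) ^ m / 2" using Suc by simp
  also have "\<dots> = 4 * sqrt (1/2) ^ Suc (Suc m)"
    by (simp add: power2_eq_square[symmetric])
  finally show ?case using Suc by simp
qed

lemma summable_sqrt_b: "summable (\<lambda>m. sqrt (cf_beta w m))"
proof (rule summable_comparison_test')
  show "summable (\<lambda>m. 2 * sqrt (sqrt (1/2)) ^ m)"
    by (intro summable_mult summable_geometric) simp
  fix m :: nat
  have "sqrt (cf_beta w m) \<le> sqrt (4 * sqrt (1/2) ^ m)"
    using b_geom[of m] by (simp only: real_sqrt_le_iff)
  also have "\<dots> = 2 * sqrt (sqrt (1/2)) ^ m" by (simp add: real_sqrt_mult real_sqrt_power)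
  moreover have "sqrt (cf_beta w m) \<ge> 0" using b_pos[OF w0 w1 wirr, of m] by simp
  ultimately show "norm (sqrt (cf_beta w m)) \<le> 2 * sqrt (sqrt (1/2)) ^ m" by simp
qed

lemma lnom: "ln (1 / cf_omega w j) = ln (1 / cf_beta w (Suc j)) - ln (1 / cf_beta w j)"
  using om_pos[OF w0 w1 wirr, of j] b_pos[OF w0 w1 wirr, of j]
  by (simp add: b_Suc[OF w0 w1 wirr] ln_div ln_mult)

lemma sbp: "(\<Sum>j=0..k. cf_beta w j * ln (1 / cf_omega w j)) =
   (\<Sum>j=0..k. (cf_beta w j - cf_beta w (Suc j)) * ln (1 / cf_beta w (Suc j)))
     + cf_beta w (Suc k) * ln (1 / cf_beta w (Suc k))"
proof (induction k)
  case 0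
  show ?case by (simp add: lnom b_0[OF w0 w1 wirr] b_Suc[OF w0 w1 wirr] algebra_simps)
next
  case (Suc k)
  show ?case unfolding sum.atLeast0_atMost_Suc Suc.IH lnom[of "Suc k"] by (simp add: algebra_simps)
qed

lemma T_bounds:
  fixes j :: nat
  defines "T \<equiv> ln (real (cf_q w (Suc j))) / real (cf_q w j) - (cf_beta w j - cf_beta w (Suc j)) * ln (1 / cf_beta w (Suc j))"
  shows "- 2 * ln 2 * cf_beta w j \<le> T \<and> T \<le> 2 * (cf_beta w (Suc j) * ln (1 / cf_beta w (Suc j)))"
proof -
  define Q0 where "Q0 = real (cf_q w j)"
  define Q1 where "Q1 = real (cf_q w (Suc j))"
  define b0 where "b0 = cf_beta w j"
  define b1 where "b1 = cf_beta w (Suc j)"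
  define L where "L = ln (1 / b1)"
  define u where "u = 1 / Q0"
  have Q0: "Q0 \<ge> 1" and Q1: "Q1 \<ge> 1" using q_ge1[OF w0 w1 wirr] by (auto simp: Q0_def Q1_def)
  have b0: "b0 > 0" and b1: "b1 > 0" using b_pos[OF w0 w1 wirr] by (auto simp: b0_def b1_def)
  have b10: "b1 \<le> b0" using b_dec[OF w0 w1 wirr] by (simp add: b0_def b1_def)
  have b11: "b1 \<le> 1" using b_le1[OF w0 w1 wirr] by (simp add: b1_def)
  have u0: "u > 0" using Q0 by (simp add: u_def)
  have ub0: "b0 \<le> u" using qb_le1[OF w0 w1 wirr, of j] Q0 by (simp add: u_def b0_def Q0_def field_simps)
  have ub1: "u \<le> b0 + b1" using qb_ge[OF w0 w1 wirr, of j] Q0 by (simp add: u_def b0_def b1_def Q0_def field_simps)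
  have L0: "L \<ge> 0" using b1 b11 by (simp add: L_def ln_div)
  have lnQ0: "ln Q1 \<ge> 0" using Q1 by simp
  have LQ1: "ln Q1 \<le> L"
  proof -
    have "Q1 * b1 \<le> 1" using qb_le1[OF w0 w1 wirr, of "Suc j"] by (simp add: Q1_def b1_def)
    then have "Q1 \<le> 1 / b1" using b1 by (simp add: field_simps)
    then show ?thesis unfolding L_def using Q1 b1 by simp
  qed
  have LQ2: "L \<le> ln 2 + ln Q1"
  proof -
    have "1 \<le> 2 * Q1 * b1" using qb_ge2[OF w0 w1 wirr, of "Suc j"] by (simp add: Q1_def b1_def)
    then have "1 / b1 \<le> 2 * Q1" using b1 by (simp add: field_simps)
    then have "ln (1/b1) \<le> ln (2 * Q1)" using b1 Q1 by simp
    then show ?thesis unfolding L_def using Q1 by (simp add: ln_mult)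
  qed
  have T: "T = ln Q1 * u - (b0 - b1) * L"
    by (simp add: T_def Q0_def Q1_def b0_def b1_def L_def u_def)
  have up1: "ln Q1 * u \<le> L * u" using LQ1 u0 by (simp add: mult_right_mono)
  have up2: "L * u \<le> L * (b0 + b1)" using ub1 L0 by (simp add: mult_left_mono)
  have lo1: "(L - ln 2) * u \<le> ln Q1 * u" using LQ2 u0 by (intro mult_right_mono) auto
  have lo2: "L * b0 \<le> L * u" using ub0 L0 by (simp add: mult_left_mono)
  have lo3: "ln 2 * u \<le> ln 2 * (b0 + b1)" using ub1 by (simp add: mult_left_mono)
  have lo4: "0 \<le> L * b1" using L0 b1 by simp
  have "T \<le> 2 * (b1 * L)" using T up1 up2 by (simp add: algebra_simps)
  moreover have "- 2 * ln 2 * b0 \<le> T"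
  proof -
    have t1: "T \<ge> L * b1 - ln 2 * u" using T lo1 lo2 by (simp add: algebra_simps)
    have t2: "ln 2 * b1 \<le> ln 2 * b0" using b10 by (intro mult_left_mono) auto
    have t3: "ln 2 * u \<le> ln 2 * b0 + ln 2 * b1" using lo3 by (simp only: distrib_left)
    have "- 2 * (ln 2 * b0) \<le> T" using t1 t2 t3 lo4 by linarith
    then show ?thesis by (simp add: algebra_simps)
  qed
  ultimately show ?thesis by (simp add: b0_def b1_def L_def)
qed

lemma AB_bound: "\<exists>C. \<forall>k. \<bar>(\<Sum>j=0..k. ln (real (cf_q w (j+1))) / real (cf_q w j))
                     - (\<Sum>j=0..k. cf_beta w j * ln (1 / cf_omega w j))\<bar> \<le> C"
proof -
  define S0 where "S0 = suminf (\<lambda>m. sqrt (cf_beta w m))"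
  define S1 where "S1 = suminf (\<lambda>m. sqrt (cf_beta w (Suc m)))"
  have sm0: "summable (\<lambda>m. sqrt (cf_beta w m))" by (rule summable_sqrt_b)
  have sm1: "summable (\<lambda>m. sqrt (cf_beta w (Suc m)))" using summable_Suc_iff[where f="\<lambda>m. sqrt (cf_beta w m)"] sm0 by simp
  define T where "T j = ln (real (cf_q w (Suc j))) / real (cf_q w j) - (cf_beta w j - cf_beta w (Suc j)) * ln (1 / cf_beta w (Suc j))" for j
  have bl: "cf_beta w m * ln (1 / cf_beta w m) \<le> 2 * sqrt (cf_beta w m)" for m
    by (rule xlog_le[OF b_pos[OF w0 w1 wirr] b_le1[OF w0 w1 wirr]])
  have bl0: "0 \<le> cf_beta w m * ln (1 / cf_beta w m)" for m
  proof -
    have "1 \<le> 1 / cf_beta w m" using b_pos[OF w0 w1 wirr, of m] b_le1[OF w0 w1 wirr, of m] by simp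
    then have "0 \<le> ln (1 / cf_beta w m)" by (rule ln_ge_zero)
    then show ?thesis using b_pos[OF w0 w1 wirr, of m] by simp
  qed
  have bs: "cf_beta w m \<le> sqrt (cf_beta w m)" for m
  proof (rule real_le_rsqrt)
    have "cf_beta w m * cf_beta w m \<le> 1 * cf_beta w m"
      using b_pos[OF w0 w1 wirr, of m] b_le1[OF w0 w1 wirr, of m] by (intro mult_right_mono) auto
    then show "(cf_beta w m)\<^sup>2 \<le> cf_beta w m" by (simp add: power2_eq_square)
  qed
  have eq: "(\<Sum>j=0..k. ln (real (cf_q w (j+1))) / real (cf_q w j))
                     - (\<Sum>j=0..k. cf_beta w j * ln (1 / cf_omega w j))
          = (\<Sum>j=0..k. T j) - cf_beta w (Suc k) * ln (1 / cf_beta w (Suc k))" for k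
    unfolding sbp T_def by (simp add: sum_subtractf)
  have upper: "(\<Sum>j=0..k. T j) \<le> 4 * S1" for k
  proof -
    have "(\<Sum>j=0..k. T j) \<le> (\<Sum>j=0..k. 4 * sqrt (cf_beta w (Suc j)))"
    proof (intro sum_mono)
      fix j
      have "T j \<le> 2 * (cf_beta w (Suc j) * ln (1 / cf_beta w (Suc j)))"
        using T_bounds[of j] unfolding T_def by blast
      then show "T j \<le> 4 * sqrt (cf_beta w (Suc j))" using bl[of "Suc j"] by linarith
    qed
    also have "\<dots> = 4 * (\<Sum>j=0..k. sqrt (cf_beta w (Suc j)))" by (simp add: sum_distrib_left)
    also have "\<dots> \<le> 4 * S1" unfolding S1_def using sm1 b_pos[OF w0 w1 wirr] by (intro mult_left_mono sum_le_suminf) (auto intro: less_imp_le)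
    finally show ?thesis .
  qed
  have lower: "(\<Sum>j=0..k. T j) \<ge> - 2 * ln 2 * S0" for k
  proof -
    have "(\<Sum>j=0..k. T j) \<ge> (\<Sum>j=0..k. - 2 * ln 2 * sqrt (cf_beta w j))"
    proof (intro sum_mono)
      fix j
      have "- 2 * ln 2 * sqrt (cf_beta w j) \<le> - 2 * ln 2 * cf_beta w j"
        using bs[of j] by simp
      then show "- 2 * ln 2 * sqrt (cf_beta w j) \<le> T j" using T_bounds[of j] unfolding T_def by linarith
    qed
    also have "(\<Sum>j=0..k. - 2 * ln 2 * sqrt (cf_beta w j)) = - 2 * (ln 2 * (\<Sum>j=0..k. sqrt (cf_beta w j)))"
      by (simp add: sum_distrib_left mult.assoc)
    finally have h1: "- 2 * (ln 2 * (\<Sum>j=0..k. sqrt (cf_beta w j))) \<le> (\<Sum>j=0..k. T j)" .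
    have "(\<Sum>j=0..k. sqrt (cf_beta w j)) \<le> S0" unfolding S0_def using sm0 b_pos[OF w0 w1 wirr] by (intro sum_le_suminf) (auto intro: less_imp_le)
    then have h2: "ln 2 * (\<Sum>j=0..k. sqrt (cf_beta w j)) \<le> ln 2 * S0" by (intro mult_left_mono) auto
    have "- 2 * (ln 2 * S0) \<le> (\<Sum>j=0..k. T j)" using h1 h2 by linarith
    then show ?thesis by (simp add: algebra_simps)
  qed
  have last: "cf_beta w (Suc k) * ln (1 / cf_beta w (Suc k)) \<le> 2" for k
  proof -
    have "sqrt (cf_beta w (Suc k)) \<le> 1" using b_le1[OF w0 w1 wirr, of "Suc k"] by simp
    then show ?thesis using bl[of "Suc k"] by linarith
  qed
  show ?thesis
  proof (intro exI allI)
    fix k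
    have l2: "ln (2::real) \<ge> 0" by simp
    have "\<bar>(\<Sum>j=0..k. T j) - cf_beta w (Suc k) * ln (1 / cf_beta w (Suc k))\<bar> \<le> 4 * S1 + 2 * ln 2 * S0 + 2"
    proof -
      have "S0 \<ge> 0" unfolding S0_def using sm0 b_pos[OF w0 w1 wirr] by (intro suminf_nonneg) (auto intro: less_imp_le)
      then have p0: "2 * ln 2 * S0 \<ge> 0" using l2 by simp
      have p1: "S1 \<ge> 0" unfolding S1_def using sm1 b_pos[OF w0 w1 wirr] by (intro suminf_nonneg) (auto intro: less_imp_le)
      show ?thesis unfolding abs_le_iff using upper[of k] lower[of k] last[of k] bl0[of "Suc k"] p0 p1 by linarith
    qed
    then show "\<bar>(\<Sum>j=0..k. ln (real (cf_q w (j+1))) / real (cf_q w j))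
                     - (\<Sum>j=0..k. cf_beta w j * ln (1 / cf_omega w j))\<bar> \<le> 4 * S1 + 2 * ln 2 * S0 + 2"
      unfolding eq .
  qed
qed

end


theorem mainTheorem6:
  fixes w s :: real
  assumes "0 < w" "w < 1" "w \<notin> \<rat>" "s > 0"
  shows "limsup (\<lambda>N::nat. ereal ((\<Sum>j=0..cf_kN w N. ln (real (cf_q w (j+1))) / real (cf_q w j))
                                   - s * ln (real N))) < \<infinity>
     \<longleftrightarrow>
         limsup (\<lambda>k::nat. ereal ((\<Sum>j=0..k. cf_beta w j * ln (1 / cf_omega w j))
                                   + s * ln (cf_beta w k))) < \<infinity>"
proof -
  note w = assms(1,2,3)
  define A where "A k = (\<Sum>j=0..k. ln (real (cf_q w (j+1))) / real (cf_q w j))" for k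
  define B where "B k = (\<Sum>j=0..k. cf_beta w j * ln (1 / cf_omega w j))" for k
  define f where "f N = A (cf_kN w N) - s * ln (real N)" for N
  define g where "g k = B k + s * ln (cf_beta w k)" for k
  obtain C where C: "\<And>k. \<bar>A k - B k\<bar> \<le> C" using AB_bound[OF w] unfolding A_def B_def by blast
  have lnb1: "s * ln (cf_beta w k) \<le> - s * ln (real (cf_q w k))" for k
  proof -
    have q: "real (cf_q w k) \<ge> 1" using q_ge1[OF w, of k] by simp
    have b: "cf_beta w k > 0" using b_pos[OF w] by blast
    have "ln (real (cf_q w k) * cf_beta w k) \<le> 0" using qb_le1[OF w, of k] q b by simp
    then have "ln (cf_beta w k) \<le> - ln (real (cf_q w k))" using q b by (simp add: ln_mult)
    then have "s * ln (cf_beta w k) \<le> s * (- ln (real (cf_q w k)))" using assms(4) by (intro mult_left_mono) auto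
    then show ?thesis by simp
  qed
  have lnb2: "- s * ln (real (cf_q w k)) \<le> s * ln (cf_beta w k) + s * ln 2" for k
  proof -
    have q: "real (cf_q w k) \<ge> 1" using q_ge1[OF w, of k] by simp
    have b: "cf_beta w k > 0" using b_pos[OF w] by blast
    have "ln (2 * real (cf_q w k) * cf_beta w k) \<ge> 0" using qb_ge2[OF w, of k] q b by simp
    then have "- ln (real (cf_q w k)) \<le> ln (cf_beta w k) + ln 2" using q b by (simp add: ln_mult)
    then have "s * (- ln (real (cf_q w k))) \<le> s * (ln (cf_beta w k) + ln 2)" using assms(4) by (intro mult_left_mono) auto
    then show ?thesis by (simp add: algebra_simps)
  qed
  have "(\<exists>M. \<forall>N. f N \<le> M) \<longleftrightarrow> (\<exists>M. \<forall>k. g k \<le> M)"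
  proof
    assume "\<exists>M. \<forall>N. f N \<le> M"
    then obtain M where M: "\<And>N. f N \<le> M" by blast
    have "g k \<le> max (g 0) (M + C)" for k
    proof (cases "k = 0")
      case True then show ?thesis by simp
    next
      case False
      then have "cf_kN w (cf_q w k) = k" using kN_q[OF w] by simp
      then have "A k - s * ln (real (cf_q w k)) \<le> M" using M[of "cf_q w k"] by (simp add: f_def)
      moreover have "A k - B k \<ge> - C" using C[of k] by linarith
      ultimately have "g k \<le> M + C" using lnb1[of k] unfolding g_def by linarith
      then show ?thesis by linarith
    qed
    then show "\<exists>M. \<forall>k. g k \<le> M" by blast
  next
    assume "\<exists>M. \<forall>k. g k \<le> M"
    then obtain M where M: "\<And>k. g k \<le> M" by blast
    have "f N \<le> max (f 0) (M + C + s * ln 2)" for N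
    proof (cases "N = 0")
      case True then show ?thesis by simp
    next
      case False
      define k where "k = cf_kN w N"
      have "cf_q w k \<le> N" using kN_spec[OF w, of N] False by (simp add: k_def)
      then have "ln (real (cf_q w k)) \<le> ln (real N)" using q_ge1[OF w, of k] by simp
      then have "s * ln (real (cf_q w k)) \<le> s * ln (real N)" using assms(4) by (simp add: mult_left_mono)
      moreover have "A k - B k \<le> C" using C[of k] by linarith
      moreover have "g k \<le> M" by (rule M)
      ultimately have "f N \<le> M + C + s * ln 2" using lnb2[of k] unfolding f_def g_def k_def[symmetric] by linarith
      then show ?thesis by linarith
    qed
    then show "\<exists>M. \<forall>N. f N \<le> M" by blast
  qed
  then show ?thesis unfolding limsup_bdd_iff f_def g_def A_def B_def .
qed

end
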